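(* Let $d\ge2$. For any matrix $X\in\mathbb{C}^{d^2\times d^2}$ (acting on $\mathbb{C}^d\otimes\mathbb{C}^d$), $$\sum_{\mathbf{a}\in\{0,\dots,d-1\}^2} (W_\mathbf{a}\otimes W_\mathbf{a})\,X\,(W_\mathbf{a}\otimes W_\mathbf{a})^\dagger = \sum_{\mathbf{a}\in\{0,\dots,d-1\}^2} \operatorname{tr}\!\big(X\,(W_\mathbf{a}^\dagger\otimes W_\mathbf{a})\big)\, W_\mathbf{a}\otimes W_\mathbf{a}^\dagger.$$
   Context: $\{|i\rangle\}_{i=0}^{d-1}$ is the standard basis of $\mathbb{C}^d$, indices mod $d$. Let $\tau=\exp(2\pi i\frac{d+1}{2d})$, $\omega=\tau^2=\exp(2\pi i/d)$, $S=\sum_{i=0}^{d-1}|i+1\rangle\langle i|$, $C=\sum_{i=0}^{d-1}\omega^i|i\rangle\langle i|$, and for $\mathbf{a}=(a_1,a_2)\in\mathbb{Z}^2$ let $W_\mathbf{a}=\tau^{a_1a_2}S^{a_1}C^{a_2}$. *)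

theory Defs
  imports Complex_Main "Jordan_Normal_Form.Matrix"
begin

definition tau :: "nat \<Rightarrow> complex" where
  "tau d = exp (2 * of_real pi * \<i> * of_nat (d + 1) / of_nat (2 * d))"

definition omega :: "nat \<Rightarrow> complex" where
  "omega d = (tau d)^2"

definition shift :: "nat \<Rightarrow> complex mat" where
  "shift d = mat d d (\<lambda>(r, c). if r = (c + 1) mod d then 1 else 0)"

definition clock :: "nat \<Rightarrow> complex mat" where
  "clock d = mat d d (\<lambda>(r, c). if r = c then (omega d) ^ r else 0)"

definition weyl :: "nat \<Rightarrow> nat \<Rightarrow> nat \<Rightarrow> complex mat" where
  "weyl d a1 a2 = (tau d) ^ (a1 * a2) \<cdot>\<^sub>m (shift d ^\<^sub>m a1 * clock d ^\<^sub>m a2)"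

definition dagger :: "complex mat \<Rightarrow> complex mat" where
  "dagger A = mat (dim_col A) (dim_row A) (\<lambda>(i, j). cnj (A $$ (j, i)))"

(* Kronecker (tensor) product, basis |i>|j> ordered as index i * dim + j *)
definition kron :: "complex mat \<Rightarrow> complex mat \<Rightarrow> complex mat" where
  "kron A B = mat (dim_row A * dim_row B) (dim_col A * dim_col B)
     (\<lambda>(i, j). A $$ (i div dim_row B, j div dim_col B) * B $$ (i mod dim_row B, j mod dim_col B))"

definition mtrace :: "complex mat \<Rightarrow> complex" where
  "mtrace A = (\<Sum>i<dim_row A. A $$ (i, i))"

definition msum :: "nat \<Rightarrow> ('i \<Rightarrow> complex mat) \<Rightarrow> 'i set \<Rightarrow> complex mat" where
  "msum n f I = mat n n (\<lambda>ij. \<Sum>a\<in>I. f a $$ ij)"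

end

theory Submission
  imports Defs
begin

lemma tau_cis: "tau d = cis (pi * (d + 1) / d)"
proof (cases "d = 0")
  case True then show ?thesis by (simp add: tau_def)
next
  case False
  have "2 * complex_of_real pi * \<i> * of_nat (d + 1) / of_nat (2 * d) = \<i> * complex_of_real (pi * (d + 1) / d)"
    using False by (simp add: field_simps)
  then show ?thesis by (simp only: tau_def cis_conv_exp)
qed

lemma omega_pow: "omega d ^ m = cis (2 * pi * m * (d + 1) / d)"
  unfolding omega_def tau_cis power_mult[symmetric] DeMoivre by (simp add: field_simps)

lemma cnj_tau: "cnj (tau d) = inverse (tau d)"
  unfolding tau_cis by (simp add: cis_cnj)

lemma tau_nz: "tau d \<noteq> 0" unfolding tau_cis by simp

lemma cnj_omega: "cnj (omega d) = inverse (omega d)"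
  unfolding omega_def by (simp add: cnj_tau power_inverse)

lemma omega_nz: "omega d \<noteq> 0" unfolding omega_def by (simp add: tau_nz)

lemma omega_d: "d > 0 \<Longrightarrow> omega d ^ d = 1"
proof -
  assume "d > 0"
  have e: "2 * pi * real d * real (d + 1) / real d = 2 * pi * real_of_int (int (d+1))"
    using \<open>d>0\<close> by simp
  have "omega d ^ d = cis (2 * pi * real_of_int (int (d+1)))"
    by (simp only: omega_pow e)
  also have "\<dots> = 1" by (rule cis_multiple_2pi) simp
  finally show ?thesis .
qed

lemma omega_mod: "d > 0 \<Longrightarrow> omega d ^ m = omega d ^ (m mod d)"
proof -
  assume d: "d > 0"
  have "omega d ^ m = omega d ^ (d * (m div d) + m mod d)" by simp
  also have "\<dots> = omega d ^ (m mod d)"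
    unfolding power_add power_mult omega_d[OF d] by simp
  finally show ?thesis .
qed

lemma omega_prim: assumes "0 < m" "m < d" shows "omega d ^ m \<noteq> 1"
proof
  assume "omega d ^ m = 1"
  then have "cos (2 * pi * m * (d + 1) / d) = 1"
    unfolding omega_pow by (metis cis.sel(1) one_complex.sel(1))
  then have "\<exists>n::int. 2 * pi * m * (d + 1) / d = real_of_int n * 2 * pi"
    by (simp only: cos_one_2pi_int)
  then obtain n :: int where n: "2 * pi * m * (d + 1) / d = real_of_int n * 2 * pi"
    by blast
  have "2*pi*(real m * real(d+1)) = 2*pi*(real_of_int n * real d)" using n assms
    by (simp add: field_simps)
  then have "real m * real(d+1) = real_of_int n * real d" by simp
  then have "real (m * (d+1)) = real_of_int n * d" by (simp add: algebra_simps)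
  then have "int (m * (d+1)) = n * int d"
    by (metis of_int_eq_iff of_int_mult of_int_of_nat_eq)
  then have "int d dvd int (m * (d + 1))" by simp
  then have "d dvd m * (d+1)" by presburger
  then have "d dvd m" 
    by (metis coprime_dvd_mult_left_iff coprime_Suc_right_nat Suc_eq_plus1)
  with assms show False by (simp add: nat_dvd_not_less)
qed

lemma omega_eq: assumes d: "d > 0" shows "omega d ^ x = omega d ^ y \<longleftrightarrow> x mod d = y mod d"
proof
  assume "x mod d = y mod d" then show "omega d ^ x = omega d ^ y"
    using omega_mod[OF d] by metis
next
  assume h: "omega d ^ x = omega d ^ y"
  have gen: "a < b \<Longrightarrow> b < d \<Longrightarrow> omega d ^ a \<noteq> omega d ^ b" for a b
  proof
    assume "a < b" "b < d" "omega d ^ a = omega d ^ b"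
    have "omega d ^ b = omega d ^ a * omega d ^ (b - a)"
      using \<open>a<b\<close> by (simp add: power_add[symmetric])
    then have "omega d ^ a * 1 = omega d ^ a * omega d ^ (b - a)"
      using \<open>omega d ^ a = omega d ^ b\<close> by simp
    then have "omega d ^ (b - a) = 1" using omega_nz by simp
    moreover have "0 < b - a" "b - a < d" using \<open>a<b\<close> \<open>b<d\<close> by auto
    ultimately show False using omega_prim[of "b - a" d] by blast
  qed
  have "omega d ^ (x mod d) = omega d ^ (y mod d)" using h omega_mod[OF d] by metis
  moreover have "x mod d < d" "y mod d < d" using d by auto
  ultimately show "x mod d = y mod d" using gen
    by (metis linorder_neqE_nat)
qed

lemma root_sum: assumes d: "d > 0"
  shows "(\<Sum>a<d. omega d ^ (x * a) * cnj (omega d ^ (y * a))) = (if x mod d = y mod d then of_nat d else 0)"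
proof -
  define z where "z = omega d ^ x * inverse (omega d ^ y)"
  have t: "omega d ^ (x * a) * cnj (omega d ^ (y * a)) = z ^ a" for a
    unfolding z_def by (simp add: cnj_omega power_mult power_mult_distrib power_inverse)
  have zd: "z ^ d = 1"
    unfolding z_def power_mult_distrib power_inverse power_mult[symmetric]
    by (simp add: mult.commute[of _ d] power_mult omega_d[OF d])
  have z1: "z = 1 \<longleftrightarrow> x mod d = y mod d"
    unfolding z_def using omega_eq[OF d, of x y] omega_nz
    by (simp add: field_simps)
  show ?thesis unfolding t sum_gp_strict using zd z1 by simp
qed


lemma mult_entry: "A \<in> carrier_mat n m \<Longrightarrow> B \<in> carrier_mat m k \<Longrightarrow> i < n \<Longrightarrow> j < k \<Longrightarrow>
  (A * B) $$ (i, j) = (\<Sum>l<m. A $$ (i, l) * B $$ (l, j))"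
  by (simp add: scalar_prod_def atLeast0LessThan)

lemma shift_dim[simp]: "dim_row (shift d) = d" "dim_col (shift d) = d" unfolding shift_def by simp_all
lemma clock_dim[simp]: "dim_row (clock d) = d" "dim_col (clock d) = d" unfolding clock_def by simp_all
lemma shift_carrier[simp]: "shift d \<in> carrier_mat d d" unfolding shift_def by simp
lemma clock_carrier[simp]: "clock d \<in> carrier_mat d d" unfolding clock_def by simp
lemma weyl_carrier[simp]: "weyl d a1 a2 \<in> carrier_mat d d" unfolding weyl_def
  by (simp add: mult_carrier_mat[of _ d d _ d])

lemma shift_pow_entry:
  assumes "i < d" "j < d"
  shows "(shift d ^\<^sub>m a) $$ (i, j) = (if i = (j + a) mod d then 1 else 0)"
  using assms
proof (induction a arbitrary: i j)
  case 0 then show ?case by simp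
next
  case (Suc a)
  have "(shift d ^\<^sub>m Suc a) $$ (i, j) = (\<Sum>k<d. (shift d ^\<^sub>m a) $$ (i, k) * shift d $$ (k, j))"
    unfolding pow_mat.simps(2) by (rule mult_entry[of _ d d _ d]) (use Suc.prems in auto)
  also have "\<dots> = (\<Sum>k<d. if k = (j + 1) mod d then (if i = (k + a) mod d then 1 else 0) else 0)"
    using Suc by (intro sum.cong) (auto simp: shift_def)
  also have "\<dots> = (if i = ((j + 1) mod d + a) mod d then 1 else 0)"
    using Suc.prems by (simp add: sum.delta)
  also have "((j + 1) mod d + a) mod d = (j + Suc a) mod d" by (simp add: mod_add_left_eq)
  finally show ?case .
qed

lemma clock_pow_entry:
  assumes "i < d" "j < d"
  shows "(clock d ^\<^sub>m a) $$ (i, j) = (if i = j then omega d ^ (i * a) else 0)"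
  using assms
proof (induction a arbitrary: i j)
  case 0 then show ?case by simp
next
  case (Suc a)
  have "(clock d ^\<^sub>m Suc a) $$ (i, j) = (\<Sum>k<d. (clock d ^\<^sub>m a) $$ (i, k) * clock d $$ (k, j))"
    unfolding pow_mat.simps(2) by (rule mult_entry[of _ d d _ d]) (use Suc.prems in auto)
  also have "\<dots> = (\<Sum>k<d. if k = i then (if i = j then omega d ^ (i * a) * omega d ^ i else 0) else 0)"
    using Suc by (intro sum.cong) (auto simp: clock_def)
  also have "\<dots> = (if i = j then omega d ^ (i * Suc a) else 0)"
    using Suc.prems by (simp add: sum.delta power_add)
  finally show ?case .
qed

lemma weyl_entry:
  assumes "i < d" "j < d"
  shows "weyl d a1 a2 $$ (i, j) = (if i = (j + a1) mod d then tau d ^ (a1 * a2) * omega d ^ (j * a2) else 0)"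
proof -
  have "(shift d ^\<^sub>m a1 * clock d ^\<^sub>m a2) $$ (i, j) = (\<Sum>k<d. (shift d ^\<^sub>m a1) $$ (i, k) * (clock d ^\<^sub>m a2) $$ (k, j))"
    by (rule mult_entry[of _ d d _ d]) (use assms in auto)
  also have "\<dots> = (\<Sum>k<d. if k = j then (if i = (j + a1) mod d then omega d ^ (j * a2) else 0) else 0)"
    using assms by (intro sum.cong) (auto simp: shift_pow_entry clock_pow_entry)
  also have "\<dots> = (if i = (j + a1) mod d then omega d ^ (j * a2) else 0)"
    using assms by (simp add: sum.delta)
  finally show ?thesis unfolding weyl_def using assms
    by (simp add: mult_carrier_mat[of _ d d _ d])
qed

lemma dagger_carrier[simp]: "A \<in> carrier_mat n m \<Longrightarrow> dagger A \<in> carrier_mat m n"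
  unfolding dagger_def by auto
lemma dagger_entry: "A \<in> carrier_mat n m \<Longrightarrow> i < m \<Longrightarrow> j < n \<Longrightarrow> dagger A $$ (i, j) = cnj (A $$ (j, i))"
  unfolding dagger_def by auto

lemma kron_carrier[simp]: "A \<in> carrier_mat d d \<Longrightarrow> B \<in> carrier_mat d d \<Longrightarrow> kron A B \<in> carrier_mat (d*d) (d*d)"
  unfolding kron_def by auto
lemma kron_entry: "A \<in> carrier_mat d d \<Longrightarrow> B \<in> carrier_mat d d \<Longrightarrow> i < d \<Longrightarrow> j < d \<Longrightarrow> k < d \<Longrightarrow> l < d \<Longrightarrow>
   kron A B $$ (i * d + j, k * d + l) = A $$ (i, k) * B $$ (j, l)"
proof -
  assume a: "A \<in> carrier_mat d d" "B \<in> carrier_mat d d" "i < d" "j < d" "k < d" "l < d"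
  have lt: "x * d + y < d * d" if "x < d" "y < d" for x y
  proof -
    have "x * d + y < (x + 1) * d" using that by simp
    also have "(x + 1) * d \<le> d * d" using that by (intro mult_right_mono) auto
    finally show ?thesis .
  qed
  have "i * d + j < d * d" "k * d + l < d * d" using a lt by auto
  then show ?thesis unfolding kron_def using a by auto
qed

lemma sum_split: "(\<Sum>P<(d::nat)*d. f P) = (\<Sum>p<d. \<Sum>q<d. f (p * d + q))"
proof -
  have "(\<Sum>P<d*d. f P) = (\<Sum>p<d. \<Sum>P\<in>{p*d..<p*d+d}. f P)" using sum.nat_group[where g=f and k=d and n=d] by simp
  also have "\<dots> = (\<Sum>p<d. \<Sum>q<d. f (p * d + q))"
  proof (rule sum.cong)
    fix p
    show "(\<Sum>P\<in>{p*d..<p*d+d}. f P) = (\<Sum>q<d. f (p * d + q))"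
      using sum.shift_bounds_nat_ivl[of f 0 "p*d" d] by (simp add: add.commute atLeast0LessThan)
  qed simp
  finally show ?thesis .
qed


lemma sandwich_entry:
  assumes A: "A \<in> carrier_mat n n" and X: "X \<in> carrier_mat n n" and B: "B \<in> carrier_mat n n"
    and "I < n" "J < n"
  shows "(A * X * dagger B) $$ (I, J) = (\<Sum>P<n. \<Sum>Q<n. A $$ (I, P) * X $$ (P, Q) * cnj (B $$ (J, Q)))"
proof -
  have "(A * X * dagger B) $$ (I, J) = (\<Sum>Q<n. (A * X) $$ (I, Q) * dagger B $$ (Q, J))"
    by (rule mult_entry[of _ n n _ n]) (use assms in auto)
  also have "\<dots> = (\<Sum>Q<n. (\<Sum>P<n. A $$ (I, P) * X $$ (P, Q)) * cnj (B $$ (J, Q)))"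
    by (intro sum.cong refl, subst mult_entry[of _ n n _ n]) (use assms in \<open>auto simp: dagger_entry\<close>)
  also have "\<dots> = (\<Sum>Q<n. \<Sum>P<n. A $$ (I, P) * X $$ (P, Q) * cnj (B $$ (J, Q)))"
    by (simp add: sum_distrib_right)
  also have "\<dots> = (\<Sum>P<n. \<Sum>Q<n. A $$ (I, P) * X $$ (P, Q) * cnj (B $$ (J, Q)))"
    by (rule sum.swap)
  finally show ?thesis .
qed

lemma trace_entry:
  assumes X: "X \<in> carrier_mat n n" and B: "B \<in> carrier_mat n n"
  shows "mtrace (X * B) = (\<Sum>P<n. \<Sum>Q<n. X $$ (P, Q) * B $$ (Q, P))"
proof -
  have dr: "dim_row (X * B) = n" using assms by simp
  show ?thesis unfolding mtrace_def dr
    by (intro sum.cong refl, rule mult_entry[of _ n n _ n]) (use assms in auto)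
qed

lemma mod_sub: "(x::nat) < d \<Longrightarrow> y < d \<Longrightarrow> (x + d - y) mod d = (if y \<le> x then x - y else x + d - y)"
proof -
  assume a: "x < d" "y < d"
  show ?thesis
  proof (cases "y \<le> x")
    case True
    have "(x + d - y) mod d = (x + d - y - d) mod d" by (rule le_mod_geq) (use True in arith)
    also have "x + d - y - d = x - y" by arith
    finally show ?thesis using True a by simp
  qed (use a in simp)
qed

lemma mod_plus: "(x::nat) < d \<Longrightarrow> y < d \<Longrightarrow> (x + y) mod d = (if x + y < d then x + y else x + y - d)"
proof -
  assume a: "x < d" "y < d"
  show ?thesis
  proof (cases "x + y < d")
    case False
    then have "x + y = (x + y - d) + d" by arith
    then have "(x + y) mod d = (x + y - d) mod d" by (metis mod_add_self2)
    then show ?thesis using False a by simp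
  qed (use a in simp)
qed

lemma delta_cond: "(x::nat) < d \<Longrightarrow> p < d \<Longrightarrow> a < d \<Longrightarrow> (x = (p + a) mod d) \<longleftrightarrow> (p = (x + d - a) mod d)"
  by (simp add: mod_sub mod_plus) arith

lemma weyl_entry2:
  assumes "i < d" "p < d" "a1 < d"
  shows "weyl d a1 a2 $$ (i, p) = (if p = (i + d - a1) mod d then tau d ^ (a1 * a2) * omega d ^ (p * a2) else 0)"
  using assms by (simp add: weyl_entry delta_cond)

lemma sum_if_const: "(\<Sum>x\<in>A. if P then f x else 0) = (if P then (\<Sum>x\<in>A. f x) else 0)"
  by simp

lemma if_mult_l: "(if P then a else 0) * b = (if P then a * b else (0::complex))" by simp
lemma if_mult_r: "b * (if P then a else 0) = (if P then b * a else (0::complex))" by simp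
lemma if_cnj: "cnj (if P then a else 0) = (if P then cnj a else 0)" by simp

lemma tau_unit: "tau d ^ m * cnj (tau d ^ m) = 1"
  by (simp add: cnj_tau power_inverse tau_nz field_simps)

lemma lhs_term:
  assumes d: "d > 0" and X: "X \<in> carrier_mat (d*d) (d*d)"
    and a: "a1 < d" and ijkl: "i < d" "j < d" "k < d" "l < d"
  shows "(kron (weyl d a1 a2) (weyl d a1 a2) * X * dagger (kron (weyl d a1 a2) (weyl d a1 a2))) $$ (i*d+j, k*d+l)
    = X $$ (((i + d - a1) mod d) * d + (j + d - a1) mod d, ((k + d - a1) mod d) * d + (l + d - a1) mod d)
      * (omega d ^ (((i + d - a1) mod d + (j + d - a1) mod d) * a2)
        * cnj (omega d ^ (((k + d - a1) mod d + (l + d - a1) mod d) * a2)))"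
proof -
  let ?W = "weyl d a1 a2"
  let ?t = "tau d ^ (a1 * a2)"
  define si where "si = (i + d - a1) mod d"
  define sj where "sj = (j + d - a1) mod d"
  define sk where "sk = (k + d - a1) mod d"
  define sl where "sl = (l + d - a1) mod d"
  have lt: "si < d" "sj < d" "sk < d" "sl < d" using d by (auto simp: si_def sj_def sk_def sl_def)
  have idx: "x * d + y < d * d" if "x < d" "y < d" for x y
  proof -
    have "x * d + y < (x + 1) * d" using that by simp
    also have "(x + 1) * d \<le> d * d" using that by (intro mult_right_mono) auto
    finally show ?thesis .
  qed
  have "(kron ?W ?W * X * dagger (kron ?W ?W)) $$ (i*d+j, k*d+l)
     = (\<Sum>P<d*d. \<Sum>Q<d*d. kron ?W ?W $$ (i*d+j, P) * X $$ (P, Q) * cnj (kron ?W ?W $$ (k*d+l, Q)))"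
    by (rule sandwich_entry) (use X ijkl idx in auto)
  also have "\<dots> = (\<Sum>p<d. \<Sum>q<d. \<Sum>r<d. \<Sum>s<d.
      (?W $$ (i, p) * ?W $$ (j, q)) * X $$ (p*d+q, r*d+s) * cnj (?W $$ (k, r) * ?W $$ (l, s)))"
    unfolding sum_split using ijkl by (simp add: kron_entry)
  also have "\<dots> = (\<Sum>p<d. \<Sum>q<d. \<Sum>r<d. \<Sum>s<d.
      if p = si then if q = sj then if r = sk then if s = sl then
       (?t * omega d ^ (p * a2) * (?t * omega d ^ (q * a2))) * X $$ (p*d+q, r*d+s)
         * cnj (?t * omega d ^ (r * a2) * (?t * omega d ^ (s * a2))) else 0 else 0 else 0 else 0)"
    by (intro sum.cong refl) (use ijkl a in \<open>simp add: weyl_entry2 si_def sj_def sk_def sl_def\<close>)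
  also have "\<dots> = (?t * omega d ^ (si * a2) * (?t * omega d ^ (sj * a2))) * X $$ (si*d+sj, sk*d+sl)
         * cnj (?t * omega d ^ (sk * a2) * (?t * omega d ^ (sl * a2)))"
    using lt by (simp only: sum_if_const sum.delta finite_lessThan lessThan_iff if_True)
  also have "\<dots> = (?t * cnj ?t) * (?t * cnj ?t) * (X $$ (si*d+sj, sk*d+sl)
      * (omega d ^ ((si + sj) * a2) * cnj (omega d ^ ((sk + sl) * a2))))"
    by (simp add: algebra_simps power_add)
  also have "\<dots> = X $$ (si*d+sj, sk*d+sl)
      * (omega d ^ ((si + sj) * a2) * cnj (omega d ^ ((sk + sl) * a2)))"
    by (simp only: tau_unit mult_1_left)
  finally show ?thesis unfolding si_def sj_def sk_def sl_def .
qed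


lemma idx_lt: "(x::nat) < d \<Longrightarrow> y < d \<Longrightarrow> x * d + y < d * d"
proof -
  assume that: "x < d" "y < d"
  have "x * d + y < (x + 1) * d" using that by simp
  also have "(x + 1) * d \<le> d * d" using that by (intro mult_right_mono) auto
  finally show ?thesis .
qed

lemma tr_term:
  assumes d: "d > 0" and X: "X \<in> carrier_mat (d*d) (d*d)" and a: "a1 < d"
  shows "mtrace (X * kron (dagger (weyl d a1 a2)) (weyl d a1 a2))
    = (\<Sum>q<d. \<Sum>r<d. X $$ (((r + a1) mod d) * d + q, r * d + (q + a1) mod d)
          * (omega d ^ (q * a2) * cnj (omega d ^ (r * a2))))"
proof -
  let ?W = "weyl d a1 a2"
  let ?t = "tau d ^ (a1 * a2)"
  have dW: "dagger ?W \<in> carrier_mat d d" by simp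
  have "mtrace (X * kron (dagger ?W) ?W) = (\<Sum>P<d*d. \<Sum>Q<d*d. X $$ (P, Q) * kron (dagger ?W) ?W $$ (Q, P))"
    by (rule trace_entry) (use X dW in auto)
  also have "\<dots> = (\<Sum>p<d. \<Sum>q<d. \<Sum>r<d. \<Sum>s<d. X $$ (p*d+q, r*d+s) * (cnj (?W $$ (p, r)) * ?W $$ (s, q)))"
    unfolding sum_split by (intro sum.cong refl) (simp add: kron_entry dagger_entry[OF weyl_carrier])
  also have "\<dots> = (\<Sum>q<d. \<Sum>r<d. \<Sum>p<d. \<Sum>s<d. X $$ (p*d+q, r*d+s) * (cnj (?W $$ (p, r)) * ?W $$ (s, q)))"
    by (subst sum.swap, rule sum.cong, rule refl, rule sum.swap)
  also have "\<dots> = (\<Sum>q<d. \<Sum>r<d. \<Sum>p<d. \<Sum>s<d.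
       if p = (r + a1) mod d then if s = (q + a1) mod d then
         X $$ (p*d+q, r*d+s) * (cnj (?t * omega d ^ (r * a2)) * (?t * omega d ^ (q * a2))) else 0 else 0)"
    by (intro sum.cong refl) (simp add: weyl_entry)
  also have "\<dots> = (\<Sum>q<d. \<Sum>r<d.
         X $$ (((r + a1) mod d)*d+q, r*d+(q + a1) mod d) * (cnj (?t * omega d ^ (r * a2)) * (?t * omega d ^ (q * a2))))"
    using d by (simp only: sum_if_const sum.delta finite_lessThan lessThan_iff mod_less_divisor if_True)
  also have "\<dots> = (\<Sum>q<d. \<Sum>r<d.
         X $$ (((r + a1) mod d)*d+q, r*d+(q + a1) mod d) * ((?t * cnj ?t) * (omega d ^ (q * a2) * cnj (omega d ^ (r * a2)))))"
    by (intro sum.cong refl) (simp add: algebra_simps)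
  finally show ?thesis by (simp only: tau_unit mult_1_left)
qed

lemma rhs_factor:
  assumes d: "d > 0" and a: "a1 < d" and ijkl: "i < d" "j < d" "k < d" "l < d"
  shows "kron (weyl d a1 a2) (dagger (weyl d a1 a2)) $$ (i*d+j, k*d+l)
     = (if i = (k + a1) mod d \<and> l = (j + a1) mod d then omega d ^ (k * a2) * cnj (omega d ^ (j * a2)) else 0)"
proof -
  let ?t = "tau d ^ (a1 * a2)"
  have "kron (weyl d a1 a2) (dagger (weyl d a1 a2)) $$ (i*d+j, k*d+l) = weyl d a1 a2 $$ (i, k) * cnj (weyl d a1 a2 $$ (l, j))"
    using ijkl by (simp add: kron_entry dagger_entry[OF weyl_carrier])
  also have "\<dots> = (if i = (k + a1) mod d \<and> l = (j + a1) mod d then (?t * cnj ?t) * (omega d ^ (k * a2) * cnj (omega d ^ (j * a2))) else 0)"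
    using ijkl by (simp add: weyl_entry algebra_simps)
  finally show ?thesis by (simp only: tau_unit mult_1_left)
qed

lemma lhs_a1:
  assumes d: "d > 0" and X: "X \<in> carrier_mat (d*d) (d*d)"
    and a: "a1 < d" and ijkl: "i < d" "j < d" "k < d" "l < d"
  shows "(\<Sum>a2<d. (kron (weyl d a1 a2) (weyl d a1 a2) * X * dagger (kron (weyl d a1 a2) (weyl d a1 a2))) $$ (i*d+j, k*d+l))
    = X $$ (((i + d - a1) mod d) * d + (j + d - a1) mod d, ((k + d - a1) mod d) * d + (l + d - a1) mod d)
      * (if ((i + d - a1) mod d + (j + d - a1) mod d) mod d = ((k + d - a1) mod d + (l + d - a1) mod d) mod d
         then of_nat d else 0)"
  unfolding lhs_term[OF assms] sum_distrib_left[symmetric]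
  by (subst root_sum[OF d, symmetric]) (simp add: mult.commute)

lemma rhs_a1:
  assumes d: "d > 0" and X: "X \<in> carrier_mat (d*d) (d*d)"
    and a: "a1 < d" and ijkl: "i < d" "j < d" "k < d" "l < d"
  shows "(\<Sum>a2<d. mtrace (X * kron (dagger (weyl d a1 a2)) (weyl d a1 a2))
                         * kron (weyl d a1 a2) (dagger (weyl d a1 a2)) $$ (i*d+j, k*d+l))
    = (if i = (k + a1) mod d \<and> l = (j + a1) mod d then
        (\<Sum>q<d. \<Sum>r<d. X $$ (((r + a1) mod d) * d + q, r * d + (q + a1) mod d)
          * (if (q + k) mod d = (r + j) mod d then of_nat d else 0)) else 0)"
proof (cases "i = (k + a1) mod d \<and> l = (j + a1) mod d")
  case False
  have "(if i = (k + a1) mod d \<and> l = (j + a1) mod d then omega d ^ (k * a2) * cnj (omega d ^ (j * a2)) else 0) = 0" for a2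
    by (rule if_not_P[OF False])
  then show ?thesis using False by (simp only: rhs_factor[OF d a ijkl] mult_zero_right sum.neutral_const if_False)
next
  case True
  have "(\<Sum>a2<d. mtrace (X * kron (dagger (weyl d a1 a2)) (weyl d a1 a2))
                         * kron (weyl d a1 a2) (dagger (weyl d a1 a2)) $$ (i*d+j, k*d+l))
     = (\<Sum>a2<d. (\<Sum>q<d. \<Sum>r<d. X $$ (((r + a1) mod d) * d + q, r * d + (q + a1) mod d)
          * (omega d ^ (q * a2) * cnj (omega d ^ (r * a2)))) * (omega d ^ (k * a2) * cnj (omega d ^ (j * a2))))"
    by (simp only: tr_term[OF d X a] rhs_factor[OF d a ijkl] if_P[OF True])
  also have "\<dots> = (\<Sum>a2<d. \<Sum>q<d. \<Sum>r<d. X $$ (((r + a1) mod d) * d + q, r * d + (q + a1) mod d)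
          * (omega d ^ ((q + k) * a2) * cnj (omega d ^ ((r + j) * a2))))"
    unfolding sum_distrib_right by (intro sum.cong refl) (simp add: algebra_simps power_add)
  also have "\<dots> = (\<Sum>q<d. \<Sum>r<d. \<Sum>a2<d. X $$ (((r + a1) mod d) * d + q, r * d + (q + a1) mod d)
          * (omega d ^ ((q + k) * a2) * cnj (omega d ^ ((r + j) * a2))))"
    by (subst sum.swap, rule sum.cong, rule refl, rule sum.swap)
  also have "\<dots> = (\<Sum>q<d. \<Sum>r<d. X $$ (((r + a1) mod d) * d + q, r * d + (q + a1) mod d)
          * (if (q + k) mod d = (r + j) mod d then of_nat d else 0))"
    by (simp only: sum_distrib_left[symmetric] root_sum[OF d])
  finally show ?thesis by (simp only: if_P[OF True])
qed


lemma nat_int_mod: "((A::nat) mod d = B mod d) \<longleftrightarrow> (int A mod int d = int B mod int d)"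
  by (metis of_nat_eq_iff of_nat_mod)

lemma modle: "0 < (d::nat) \<Longrightarrow> a mod d \<le> x + d"
  by (meson le_add2 mod_le_divisor order_trans)

lemma m1: "((a::int) mod n + b - e) mod n = (a + b - e) mod n"
  by (metis add_diff_eq mod_add_left_eq)

lemmas modsimps = of_nat_add of_nat_diff of_nat_mod m1 mod_add_left_eq mod_add_right_eq mod_diff_left_eq mod_diff_right_eq

lemma inv1: assumes "(x::nat) < d" "k < d" shows "((x + k) mod d + d - k) mod d = x"
proof -
  have "((x + k) mod d + d - k) mod d = x mod d" using assms unfolding nat_int_mod
    by (simp add: modsimps modle, (simp add: mod_eq_dvd_iff algebra_simps)?)
  then show ?thesis using assms by simp
qed

lemma inv2: assumes "(x::nat) < d" "k < d" shows "(k + (x + d - k) mod d) mod d = x"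
proof -
  have "(k + (x + d - k) mod d) mod d = x mod d" using assms unfolding nat_int_mod
    by (simp add: modsimps modle, (simp add: mod_eq_dvd_iff algebra_simps)?)
  then show ?thesis using assms by simp
qed

lemma c1: assumes "(k::nat) < d" "a < d" "j < d" shows "((k + a) mod d + j) mod d = (k + (j + a) mod d) mod d"
  using assms unfolding nat_int_mod by (simp add: modsimps modle, (simp add: mod_eq_dvd_iff algebra_simps)?)

lemma c2: assumes "(i::nat) < d" "j < d" "k < d" shows "((i + j) mod d + d - k) mod d = (j + (i + d - k) mod d) mod d"
  using assms unfolding nat_int_mod by (simp add: modsimps modle, (simp add: mod_eq_dvd_iff algebra_simps)?)

lemma c3: assumes "(r::nat) < d" "j < d" "k < d" shows "((((r + j) mod d + d - k) mod d) + k) mod d = (r + j) mod d"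
  using assms unfolding nat_int_mod by (simp add: modsimps modle, (simp add: mod_eq_dvd_iff algebra_simps)?)

lemma sig_i: assumes "(i::nat) < d" "k < d" "r < d"
  shows "(i + d - (k + d - r) mod d) mod d = (r + (i + d - k) mod d) mod d"
  using assms unfolding nat_int_mod by (simp add: modsimps modle, (simp add: mod_eq_dvd_iff algebra_simps)?)

lemma sig_j: assumes "(j::nat) < d" "k < d" "r < d"
  shows "(j + d - (k + d - r) mod d) mod d = ((r + j) mod d + d - k) mod d"
  using assms unfolding nat_int_mod by (simp add: modsimps modle, (simp add: mod_eq_dvd_iff algebra_simps)?)

lemma sig_k: assumes "k < d" "r < d"
  shows "(k + d - (k + d - r) mod d) mod d = (r::nat)"
proof -
  have "(k + d - (k + d - r) mod d) mod d = r mod d"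
    using assms unfolding nat_int_mod by (simp add: modsimps modle, (simp add: mod_eq_dvd_iff algebra_simps)?)
  then show ?thesis using assms by simp
qed

lemma sig_l0: assumes "(i::nat) < d" "j < d" "k < d" "r < d"
  shows "((((i+j) mod d + d - k) mod d) + d - (k + d - r) mod d) mod d = (((r + j) mod d + d - k) mod d + (i + d - k) mod d) mod d"
  using assms unfolding nat_int_mod by (simp add: modsimps modle, (simp add: mod_eq_dvd_iff algebra_simps)?)

lemma l_from_C: assumes "(i::nat) < d" "j < d" "k < d" "l < d" and C: "(i + j) mod d = (k + l) mod d"
  shows "l = ((i + j) mod d + d - k) mod d"
proof -
  have "l = ((l + k) mod d + d - k) mod d" using inv1 assms by simp
  also have "(l + k) mod d = (i + j) mod d" using C by (simp add: add.commute)
  finally show ?thesis .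
qed

lemma sig_l: assumes "(i::nat) < d" "j < d" "k < d" "l < d" "r < d" and C: "(i + j) mod d = (k + l) mod d"
  shows "(l + d - (k + d - r) mod d) mod d = (((r + j) mod d + d - k) mod d + (i + d - k) mod d) mod d"
proof -
  have L: "l = ((i + j) mod d + d - k) mod d" by (rule l_from_C[OF assms(1-4) C])
  show ?thesis by (subst L) (rule sig_l0[OF assms(1,2,3,5)])
qed

lemma fact1:
  assumes "(i::nat) < d" "j < d" "k < d" "l < d" "a1 < d"
  shows "(((i + d - a1) mod d + (j + d - a1) mod d) mod d = ((k + d - a1) mod d + (l + d - a1) mod d) mod d)
     \<longleftrightarrow> (i + j) mod d = (k + l) mod d"
proof -
  have nat_int_modeq: "((x::nat) mod d = y mod d) \<longleftrightarrow> (int d dvd int x - int y)" for x y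
    by (metis mod_eq_dvd_iff of_nat_eq_iff of_nat_mod)
  have "(((i + d - a1) mod d + (j + d - a1) mod d) mod d = ((k + d - a1) mod d + (l + d - a1) mod d) mod d)
     \<longleftrightarrow> ((i + d - a1) + (j + d - a1)) mod d = ((k + d - a1) + (l + d - a1)) mod d"
    by (simp add: mod_add_eq)
  also have "\<dots> \<longleftrightarrow> int d dvd int ((i + d - a1) + (j + d - a1)) - int ((k + d - a1) + (l + d - a1))"
    by (rule nat_int_modeq)
  also have "int ((i + d - a1) + (j + d - a1)) - int ((k + d - a1) + (l + d - a1)) = (int i + int j) - (int k + int l)"
    using assms by (simp add: of_nat_diff)
  also have "int d dvd (int i + int j) - (int k + int l) \<longleftrightarrow> (i + j) mod d = (k + l) mod d"
    unfolding nat_int_modeq by (simp only: of_nat_add)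
  finally show ?thesis .
qed

lemma fact2:
  assumes "(i::nat) < d" "j < d" "k < d" "l < d" "a1 < d"
  shows "(i = (k + a1) mod d \<and> l = (j + a1) mod d) \<longleftrightarrow> (a1 = (i + d - k) mod d \<and> (i + j) mod d = (k + l) mod d)"
proof
  assume h: "i = (k + a1) mod d \<and> l = (j + a1) mod d"
  have "a1 = ((a1 + k) mod d + d - k) mod d" using inv1 assms by simp
  then have A: "a1 = (i + d - k) mod d" using h by (simp add: add.commute)
  have "(i + j) mod d = ((k + a1) mod d + j) mod d" using h by simp
  also have "\<dots> = (k + (j + a1) mod d) mod d" using c1 assms by simp
  also have "\<dots> = (k + l) mod d" using h by simp
  finally show "a1 = (i + d - k) mod d \<and> (i + j) mod d = (k + l) mod d" using A by simp
next
  assume h: "a1 = (i + d - k) mod d \<and> (i + j) mod d = (k + l) mod d"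
  have "i = (k + (i + d - k) mod d) mod d" by (rule inv2[symmetric]) (use assms in auto)
  then have I: "i = (k + a1) mod d" using h by simp
  have "l = ((i + j) mod d + d - k) mod d" by (rule l_from_C) (use assms h in auto)
  also have "\<dots> = (j + (i + d - k) mod d) mod d" by (rule c2) (use assms in auto)
  finally have "l = (j + a1) mod d" using h by simp
  with I show "i = (k + a1) mod d \<and> l = (j + a1) mod d" by simp
qed

lemma fact3:
  assumes "(q::nat) < d" "r < d" "k < d" "j < d"
  shows "((q + k) mod d = (r + j) mod d) \<longleftrightarrow> q = ((r + j) mod d + d - k) mod d"
proof
  assume h: "(q + k) mod d = (r + j) mod d"
  have "q = ((q + k) mod d + d - k) mod d" using inv1 assms by simp
  then show "q = ((r + j) mod d + d - k) mod d" using h by simp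
next
  assume h: "q = ((r + j) mod d + d - k) mod d"
  then show "(q + k) mod d = (r + j) mod d" using c3 assms by simp
qed

lemma reindex_refl:
  assumes "(k::nat) < d"
  shows "(\<Sum>a<d. h a) = (\<Sum>r<d. h ((k + d - r) mod d))"
proof (rule sum.reindex_bij_witness[where i="\<lambda>x. (k + d - x) mod d" and j="\<lambda>x. (k + d - x) mod d"])
  fix a assume "a \<in> {..<d}"
  then show "(k + d - (k + d - a) mod d) mod d = a" using assms sig_k by simp
next
  fix a assume "a \<in> {..<d}"
  then show "(k + d - a) mod d \<in> {..<d}" using assms by simp
next
  fix a assume "a \<in> {..<d}"
  then show "(k + d - (k + d - a) mod d) mod d = a" using assms sig_k by simp
next
  fix a assume "a \<in> {..<d}"
  then show "(k + d - a) mod d \<in> {..<d}" using assms by simp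
qed (use assms sig_k in simp)


lemma final_comb:
  assumes d: "d > 0" and ijkl: "(i::nat) < d" "j < d" "k < d" "l < d"
  shows "(\<Sum>a1<d. X $$ (((i + d - a1) mod d) * d + (j + d - a1) mod d, ((k + d - a1) mod d) * d + (l + d - a1) mod d)
      * (if ((i + d - a1) mod d + (j + d - a1) mod d) mod d = ((k + d - a1) mod d + (l + d - a1) mod d) mod d
         then of_nat d else (0::complex)))
   = (\<Sum>a1<d. if i = (k + a1) mod d \<and> l = (j + a1) mod d then
        (\<Sum>q<d. \<Sum>r<d. X $$ (((r + a1) mod d) * d + q, r * d + (q + a1) mod d)
          * (if (q + k) mod d = (r + j) mod d then of_nat d else 0)) else 0)"
proof (cases "(i + j) mod d = (k + l) mod d")
  case False
  have "(\<Sum>a1<d. X $$ (((i + d - a1) mod d) * d + (j + d - a1) mod d, ((k + d - a1) mod d) * d + (l + d - a1) mod d)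
      * (if ((i + d - a1) mod d + (j + d - a1) mod d) mod d = ((k + d - a1) mod d + (l + d - a1) mod d) mod d
         then of_nat d else (0::complex))) = 0"
    by (rule sum.neutral) (use fact1[OF ijkl] False in auto)
  moreover have "(\<Sum>a1<d. if i = (k + a1) mod d \<and> l = (j + a1) mod d then
        (\<Sum>q<d. \<Sum>r<d. X $$ (((r + a1) mod d) * d + q, r * d + (q + a1) mod d)
          * (if (q + k) mod d = (r + j) mod d then of_nat d else 0)) else 0) = 0"
    by (rule sum.neutral) (use fact2[OF ijkl] False in auto)
  ultimately show ?thesis by simp
next
  case C: True
  define \<alpha> where "\<alpha> = (i + d - k) mod d"
  define \<beta> where "\<beta> = (\<lambda>r. ((r + j) mod d + d - k) mod d)"
  have \<alpha>lt: "\<alpha> < d" using d by (simp add: \<alpha>_def)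
  have \<beta>lt: "\<beta> r < d" for r using d by (simp add: \<beta>_def)
  have "(\<Sum>a1<d. if i = (k + a1) mod d \<and> l = (j + a1) mod d then
        (\<Sum>q<d. \<Sum>r<d. X $$ (((r + a1) mod d) * d + q, r * d + (q + a1) mod d)
          * (if (q + k) mod d = (r + j) mod d then of_nat d else 0)) else 0)
      = (\<Sum>a1<d. if a1 = \<alpha> then
        (\<Sum>q<d. \<Sum>r<d. X $$ (((r + a1) mod d) * d + q, r * d + (q + a1) mod d)
          * (if (q + k) mod d = (r + j) mod d then of_nat d else 0)) else 0)"
    by (intro sum.cong refl) (use fact2[OF ijkl] C in \<open>auto simp: \<alpha>_def\<close>)
  also have "\<dots> = (\<Sum>q<d. \<Sum>r<d. X $$ (((r + \<alpha>) mod d) * d + q, r * d + (q + \<alpha>) mod d)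
          * (if (q + k) mod d = (r + j) mod d then of_nat d else 0))"
    using \<alpha>lt by (simp add: sum.delta)
  also have "\<dots> = (\<Sum>r<d. \<Sum>q<d. if q = \<beta> r then X $$ (((r + \<alpha>) mod d) * d + q, r * d + (q + \<alpha>) mod d)
          * of_nat d else 0)"
    by (subst sum.swap, intro sum.cong refl) (use fact3 ijkl in \<open>auto simp: \<beta>_def\<close>)
  also have "\<dots> = (\<Sum>r<d. X $$ (((r + \<alpha>) mod d) * d + \<beta> r, r * d + (\<beta> r + \<alpha>) mod d) * of_nat d)"
    using \<beta>lt by (simp add: sum.delta)
  finally have R: "(\<Sum>a1<d. if i = (k + a1) mod d \<and> l = (j + a1) mod d then
        (\<Sum>q<d. \<Sum>r<d. X $$ (((r + a1) mod d) * d + q, r * d + (q + a1) mod d)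
          * (if (q + k) mod d = (r + j) mod d then of_nat d else 0)) else 0)
      = (\<Sum>r<d. X $$ (((r + \<alpha>) mod d) * d + \<beta> r, r * d + (\<beta> r + \<alpha>) mod d) * of_nat d)" .
  have "(\<Sum>a1<d. X $$ (((i + d - a1) mod d) * d + (j + d - a1) mod d, ((k + d - a1) mod d) * d + (l + d - a1) mod d)
      * (if ((i + d - a1) mod d + (j + d - a1) mod d) mod d = ((k + d - a1) mod d + (l + d - a1) mod d) mod d
         then of_nat d else (0::complex)))
     = (\<Sum>a1<d. X $$ (((i + d - a1) mod d) * d + (j + d - a1) mod d, ((k + d - a1) mod d) * d + (l + d - a1) mod d)
      * of_nat d)"
    by (intro sum.cong refl) (use fact1[OF ijkl] C in auto)
  also have "\<dots> = (\<Sum>r<d. X $$ (((i + d - (k + d - r) mod d) mod d) * d + (j + d - (k + d - r) mod d) mod d,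
       ((k + d - (k + d - r) mod d) mod d) * d + (l + d - (k + d - r) mod d) mod d) * of_nat d)"
    by (rule reindex_refl) (rule ijkl)
  also have "\<dots> = (\<Sum>r<d. X $$ (((r + \<alpha>) mod d) * d + \<beta> r, r * d + (\<beta> r + \<alpha>) mod d) * of_nat d)"
  proof (intro sum.cong refl)
    fix r assume "r \<in> {..<d}"
    then have r: "r < d" by simp
    show "X $$ (((i + d - (k + d - r) mod d) mod d) * d + (j + d - (k + d - r) mod d) mod d,
       ((k + d - (k + d - r) mod d) mod d) * d + (l + d - (k + d - r) mod d) mod d) * of_nat d
      = X $$ (((r + \<alpha>) mod d) * d + \<beta> r, r * d + (\<beta> r + \<alpha>) mod d) * of_nat d"
      unfolding \<alpha>_def \<beta>_def
      using sig_i[OF ijkl(1) ijkl(3) r] sig_j[OF ijkl(2) ijkl(3) r] sig_k[OF ijkl(3) r]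
        sig_l[OF ijkl r C] by simp
  qed
  finally show ?thesis using R by simp
qed

lemma kron_dim[simp]: "dim_row (kron A B) = dim_row A * dim_row B" "dim_col (kron A B) = dim_col A * dim_col B"
  unfolding kron_def by simp_all
lemma dagger_dim[simp]: "dim_row (dagger A) = dim_col A" "dim_col (dagger A) = dim_row A"
  unfolding dagger_def by simp_all
lemma weyl_dim[simp]: "dim_row (weyl d a1 a2) = d" "dim_col (weyl d a1 a2) = d"
  using carrier_matD[OF weyl_carrier[of d a1 a2]] by auto

lemma msum_dim[simp]: "dim_row (msum n f I) = n" "dim_col (msum n f I) = n"
  unfolding msum_def by simp_all

lemma msum_entry:
  assumes "I < n" "J < n"
  shows "msum n (\<lambda>(a1, a2). F a1 a2) ({0..<(d::nat)} \<times> {0..<d}) $$ (I, J) = (\<Sum>a1<d. \<Sum>a2<d. F a1 a2 $$ (I, J))"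
  unfolding msum_def using assms by (simp add: sum.cartesian_product atLeast0LessThan split_def)

theorem lemma5:
  fixes d :: nat and X :: "complex mat"
  assumes "d \<ge> 2" and "X \<in> carrier_mat (d * d) (d * d)"
  shows "msum (d * d)
           (\<lambda>(a1, a2). kron (weyl d a1 a2) (weyl d a1 a2) * X
                         * dagger (kron (weyl d a1 a2) (weyl d a1 a2)))
           ({0..<d} \<times> {0..<d})
       = msum (d * d)
           (\<lambda>(a1, a2). mtrace (X * kron (dagger (weyl d a1 a2)) (weyl d a1 a2))
                         \<cdot>\<^sub>m kron (weyl d a1 a2) (dagger (weyl d a1 a2)))
           ({0..<d} \<times> {0..<d})"
proof (rule eq_matI)
  have d: "d > 0" using assms(1) by simp
  fix I J assume IJ: "I < dim_row (msum (d * d)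
           (\<lambda>(a1, a2). mtrace (X * kron (dagger (weyl d a1 a2)) (weyl d a1 a2))
                         \<cdot>\<^sub>m kron (weyl d a1 a2) (dagger (weyl d a1 a2)))
           ({0..<d} \<times> {0..<d}))" "J < dim_col (msum (d * d)
           (\<lambda>(a1, a2). mtrace (X * kron (dagger (weyl d a1 a2)) (weyl d a1 a2))
                         \<cdot>\<^sub>m kron (weyl d a1 a2) (dagger (weyl d a1 a2)))
           ({0..<d} \<times> {0..<d}))"
  then have I: "I < d * d" and J: "J < d * d" by simp_all
  define i where "i = I div d"
  define j where "j = I mod d"
  define k where "k = J div d"
  define l where "l = J mod d"
  have ijkl: "i < d" "j < d" "k < d" "l < d"
    using I J d by (auto simp: i_def j_def k_def l_def less_mult_imp_div_less)
  have Ie: "I = i * d + j" and Je: "J = k * d + l" by (simp_all add: i_def j_def k_def l_def)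
  have "msum (d * d)
           (\<lambda>(a1, a2). kron (weyl d a1 a2) (weyl d a1 a2) * X
                         * dagger (kron (weyl d a1 a2) (weyl d a1 a2)))
           ({0..<d} \<times> {0..<d}) $$ (I, J)
     = (\<Sum>a1<d. \<Sum>a2<d. (kron (weyl d a1 a2) (weyl d a1 a2) * X
                         * dagger (kron (weyl d a1 a2) (weyl d a1 a2))) $$ (i*d+j, k*d+l))"
    unfolding Ie Je by (rule msum_entry) (use I J Ie Je in simp_all)
  also have "\<dots> = (\<Sum>a1<d. X $$ (((i + d - a1) mod d) * d + (j + d - a1) mod d, ((k + d - a1) mod d) * d + (l + d - a1) mod d)
      * (if ((i + d - a1) mod d + (j + d - a1) mod d) mod d = ((k + d - a1) mod d + (l + d - a1) mod d) mod d
         then of_nat d else (0::complex)))"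
    by (intro sum.cong refl) (use lhs_a1[OF d assms(2) _ ijkl] in simp)
  also have "\<dots> = (\<Sum>a1<d. if i = (k + a1) mod d \<and> l = (j + a1) mod d then
        (\<Sum>q<d. \<Sum>r<d. X $$ (((r + a1) mod d) * d + q, r * d + (q + a1) mod d)
          * (if (q + k) mod d = (r + j) mod d then of_nat d else 0)) else 0)"
    by (rule final_comb[OF d ijkl])
  also have "\<dots> = (\<Sum>a1<d. \<Sum>a2<d. mtrace (X * kron (dagger (weyl d a1 a2)) (weyl d a1 a2))
                         * kron (weyl d a1 a2) (dagger (weyl d a1 a2)) $$ (i*d+j, k*d+l))"
    by (intro sum.cong refl) (use rhs_a1[OF d assms(2) _ ijkl] in simp)
  also have "\<dots> = (\<Sum>a1<d. \<Sum>a2<d. (mtrace (X * kron (dagger (weyl d a1 a2)) (weyl d a1 a2))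
                         \<cdot>\<^sub>m kron (weyl d a1 a2) (dagger (weyl d a1 a2))) $$ (i*d+j, k*d+l))"
    using I J Ie Je by (intro sum.cong refl) simp
  also have "\<dots> = msum (d * d)
           (\<lambda>(a1, a2). mtrace (X * kron (dagger (weyl d a1 a2)) (weyl d a1 a2))
                         \<cdot>\<^sub>m kron (weyl d a1 a2) (dagger (weyl d a1 a2)))
           ({0..<d} \<times> {0..<d}) $$ (I, J)"
    unfolding Ie Je by (rule msum_entry[symmetric]) (use I J Ie Je in simp_all)
  finally show "msum (d * d)
           (\<lambda>(a1, a2). kron (weyl d a1 a2) (weyl d a1 a2) * X
                         * dagger (kron (weyl d a1 a2) (weyl d a1 a2)))
           ({0..<d} \<times> {0..<d}) $$ (I, J) = msum (d * d)
           (\<lambda>(a1, a2). mtrace (X * kron (dagger (weyl d a1 a2)) (weyl d a1 a2))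
                         \<cdot>\<^sub>m kron (weyl d a1 a2) (dagger (weyl d a1 a2)))
           ({0..<d} \<times> {0..<d}) $$ (I, J)" .
qed simp_all

end
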